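(* Let $\lambda_1\neq\lambda_2$ be real numbers, let $$J_3=\begin{pmatrix}\lambda_1&1&0\\0&\lambda_1&0\\0&0&\lambda_2\end{pmatrix},$$ and $h>0$. If $\lambda_1=0$, set $\psi=1$, $\phi=h$, $\theta=\dfrac{e^{\lambda_2h}-\lambda_2h-1}{\lambda_2h(e^{\lambda_2h}-1)}$. If $\lambda_1\neq 0$, set $$T_1=\frac{2he^{\lambda_1h}\lambda_1+\dfrac{(\lambda_1+\lambda_2)(e^{\lambda_2h}-e^{\lambda_1h})}{\lambda_1-\lambda_2}-(e^{\lambda_1h}-e^{\lambda_2h})}{2\Big[he^{\lambda_1h}\lambda_1^2-\dfrac{\lambda_1\lambda_2(e^{\lambda_1h}-e^{\lambda_2h})}{\lambda_1-\lambda_2}\Big]},$$ $$\psi=1+\frac{\lambda_1(e^{\lambda_2h}-1)-\lambda_2(e^{\lambda_1h}-1)+\lambda_1\lambda_2(e^{\lambda_1h}-e^{\lambda_2h})T_1}{\lambda_1-\lambda_2},$$ $$\phi=\frac{e^{\lambda_1h}-e^{\lambda_2h}+\big[\lambda_2(e^{\lambda_2h}-1)-\lambda_1(e^{\lambda_1h}-1)\big]T_1}{\lambda_1-\lambda_2},\qquad \theta=\frac{T_1}{\phi}.$$ Then (whenever these expressions are defined and $(1-\phi\lambda_1\theta)(1-\phi\lambda_2\theta)\neq 0$) the difference scheme $$\frac{\mathbf{x}_{k+1}-\psi\mathbf{x}_k}{\phi}=J_3\big[\theta\mathbf{x}_{k+1}+(1-\theta)\mathbf{x}_k\big]$$ is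 exact for the system $\mathbf{x}'=J_3\mathbf{x}$.
   Context: A one-step difference scheme with step size $h>0$ for $\mathbf{x}'=M\mathbf{x}$ is called exact if for every initial vector $\mathbf{x}_0$ the sequence $(\mathbf{x}_k)$ it generates satisfies $\mathbf{x}_k=\mathbf{x}(kh)$ for all $k\ge 0$, where $\mathbf{x}(t)$ solves $\mathbf{x}'=M\mathbf{x}$, $\mathbf{x}(0)=\mathbf{x}_0$. *)

theory Defs
  imports "HOL-Analysis.Analysis"
begin

definition J3 :: "real \<Rightarrow> real \<Rightarrow> real^3^3" where
  "J3 l1 l2 = vector [vector [l1, 1, 0], vector [0, l1, 0], vector [0, 0, l2]]"

definition T1_num :: "real \<Rightarrow> real \<Rightarrow> real \<Rightarrow> real" where
  "T1_num l1 l2 h = 2 * h * exp (l1*h) * l1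
     + (l1 + l2) * (exp (l2*h) - exp (l1*h)) / (l1 - l2)
     - (exp (l1*h) - exp (l2*h))"

definition T1_den :: "real \<Rightarrow> real \<Rightarrow> real \<Rightarrow> real" where
  "T1_den l1 l2 h = 2 * (h * exp (l1*h) * l1^2
     - l1 * l2 * (exp (l1*h) - exp (l2*h)) / (l1 - l2))"

definition T1 :: "real \<Rightarrow> real \<Rightarrow> real \<Rightarrow> real" where
  "T1 l1 l2 h = T1_num l1 l2 h / T1_den l1 l2 h"

definition psi :: "real \<Rightarrow> real \<Rightarrow> real \<Rightarrow> real" where
  "psi l1 l2 h = (if l1 = 0 then 1 else
     1 + (l1 * (exp (l2*h) - 1) - l2 * (exp (l1*h) - 1)
          + l1 * l2 * (exp (l1*h) - exp (l2*h)) * T1 l1 l2 h) / (l1 - l2))"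

definition phi :: "real \<Rightarrow> real \<Rightarrow> real \<Rightarrow> real" where
  "phi l1 l2 h = (if l1 = 0 then h else
     (exp (l1*h) - exp (l2*h)
      + (l2 * (exp (l2*h) - 1) - l1 * (exp (l1*h) - 1)) * T1 l1 l2 h) / (l1 - l2))"

definition theta :: "real \<Rightarrow> real \<Rightarrow> real \<Rightarrow> real" where
  "theta l1 l2 h = (if l1 = 0 then
       (exp (l2*h) - l2*h - 1) / (l2*h*(exp (l2*h) - 1))
     else T1 l1 l2 h / phi l1 l2 h)"

definition scheme_step :: "real \<Rightarrow> real \<Rightarrow> real \<Rightarrow> real^3^3 \<Rightarrow> (nat \<Rightarrow> real^3) \<Rightarrow> bool" where
  "scheme_step ps ph th M xs \<longleftrightarrow> (\<forall>k.
     (1 / ph) *\<^sub>R (xs (Suc k) - ps *\<^sub>R xs k)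
       = M *v (th *\<^sub>R xs (Suc k) + (1 - th) *\<^sub>R xs k))"

definition exact_scheme :: "real \<Rightarrow> real \<Rightarrow> real \<Rightarrow> real \<Rightarrow> real^3^3 \<Rightarrow> bool" where
  "exact_scheme h ps ph th M \<longleftrightarrow>
     (\<forall>x0 xs x. xs 0 = x0 \<and> scheme_step ps ph th M xs \<and> x 0 = x0
        \<and> (\<forall>t\<ge>0. (x has_vector_derivative (M *v x t)) (at t within {0..}))
        \<longrightarrow> (\<forall>k. xs k = x (real k * h)))"

end

theory Submission
  imports Defs
begin

lemma ode_unique:
  fixes f p g :: "real \<Rightarrow> real"
  assumes f: "\<And>t. t \<ge> 0 \<Longrightarrow> (f has_real_derivative (l * f t + g t)) (at t within {0..})"
    and p: "\<And>t. t \<ge> 0 \<Longrightarrow> (p has_real_derivative (l * p t + g t)) (at t within {0..})"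
    and f0: "f 0 = p 0" and t: "t \<ge> 0"
  shows "f t = p t"
proof -
  define u where "u = (\<lambda>s. exp (- (l * s)) * (f s - p s))"
  have "\<exists>c. \<forall>s\<in>{0::real..}. u s = c"
  proof (rule has_field_derivative_zero_constant)
    fix s :: real assume s: "s \<in> {0..}"
    have "(u has_real_derivative (- l * exp (- (l * s)) * (f s - p s) + exp (- (l * s)) * ((l * f s + g s) - (l * p s + g s)))) (at s within {0..})"
      unfolding u_def using f[of s] p[of s] s
      by (auto intro!: derivative_eq_intros)
    then show "(u has_real_derivative 0) (at s within {0..})"
      by (simp add: algebra_simps)
  qed simp
  then obtain c where c: "\<And>s. s \<ge> 0 \<Longrightarrow> u s = c" by auto
  have "u 0 = 0" using f0 by (simp add: u_def)
  then have "u t = 0" using c[of 0] c[OF t] by simp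
  then show ?thesis by (simp add: u_def)
qed

lemma J3_mult:
  "J3 l1 l2 *v v = vector [l1 * v$1 + v$2, l1 * v$2, l2 * v$3]"
  by (simp add: vec_eq_iff forall_3 J3_def matrix_vector_mult_def sum_3)

lemma ode_sol:
  fixes x :: "real \<Rightarrow> real^3" and l1 l2 t :: real
  assumes d: "\<forall>t\<ge>0. (x has_vector_derivative (J3 l1 l2 *v x t)) (at t within {0..})"
    and t: "t \<ge> 0"
  shows "x t = vector [exp (l1 * t) * (x 0 $ 1 + t * x 0 $ 2), exp (l1 * t) * x 0 $ 2, exp (l2 * t) * x 0 $ 3]"
proof -
  have c: "((\<lambda>t. x t $ i) has_real_derivative ((J3 l1 l2 *v x t) $ i)) (at t within {0..})"
    if "t \<ge> 0" for t i
    using bounded_linear.has_vector_derivative[OF bounded_linear_vec_nth d[rule_format, OF that]]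
    by (simp add: has_real_derivative_iff_has_vector_derivative)
  have c1: "((\<lambda>t. x t $ 1) has_real_derivative (l1 * x t $ 1 + x t $ 2)) (at t within {0..})"
    if "t \<ge> 0" for t using c[OF that, of 1] by (simp add: J3_mult)
  have c2: "((\<lambda>t. x t $ 2) has_real_derivative (l1 * x t $ 2 + 0)) (at t within {0..})"
    if "t \<ge> 0" for t using c[OF that, of 2] by (simp add: J3_mult)
  have c3: "((\<lambda>t. x t $ 3) has_real_derivative (l2 * x t $ 3 + 0)) (at t within {0..})"
    if "t \<ge> 0" for t using c[OF that, of 3] by (simp add: J3_mult)
  have e3: "x s $ 3 = exp (l2 * s) * x 0 $ 3" if "s \<ge> 0" for s
  proof (rule ode_unique[OF c3 _ _ that])
    fix t :: real assume "t \<ge> 0"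
    show "((\<lambda>s. exp (l2 * s) * x 0 $ 3) has_real_derivative (l2 * (exp (l2 * t) * x 0 $ 3) + 0)) (at t within {0..})"
      by (auto intro!: derivative_eq_intros)
  next
    show "x 0 $ 3 = exp (l2 * 0) * x 0 $ 3" by simp
  qed
  have e2: "x s $ 2 = exp (l1 * s) * x 0 $ 2" if "s \<ge> 0" for s
  proof (rule ode_unique[OF c2 _ _ that])
    fix t :: real assume "t \<ge> 0"
    show "((\<lambda>s. exp (l1 * s) * x 0 $ 2) has_real_derivative (l1 * (exp (l1 * t) * x 0 $ 2) + 0)) (at t within {0..})"
      by (auto intro!: derivative_eq_intros)
  next
    show "x 0 $ 2 = exp (l1 * 0) * x 0 $ 2" by simp
  qed
  have c1': "((\<lambda>t. x t $ 1) has_real_derivative (l1 * x t $ 1 + exp (l1 * t) * x 0 $ 2)) (at t within {0..})"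
    if "t \<ge> 0" for t using c1[OF that] e2[OF that] by simp
  have e1: "x s $ 1 = exp (l1 * s) * (x 0 $ 1 + s * x 0 $ 2)" if "s \<ge> 0" for s
  proof (rule ode_unique[OF c1' _ _ that])
    fix t :: real assume "t \<ge> 0"
    have "((\<lambda>s. exp (l1 * s) * (x 0 $ 1 + s * x 0 $ 2)) has_real_derivative
       (l1 * exp (l1 * t) * (x 0 $ 1 + t * x 0 $ 2) + exp (l1 * t) * x 0 $ 2)) (at t within {0..})"
      by (auto intro!: derivative_eq_intros simp: algebra_simps)
    then show "((\<lambda>s. exp (l1 * s) * (x 0 $ 1 + s * x 0 $ 2)) has_real_derivative
       (l1 * (exp (l1 * t) * (x 0 $ 1 + t * x 0 $ 2)) + exp (l1 * t) * x 0 $ 2)) (at t within {0..})"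
      by (simp add: algebra_simps)
  next
    show "x 0 $ 1 = exp (l1 * 0) * (x 0 $ 1 + 0 * x 0 $ 2)" by simp
  qed
  show ?thesis using e1[OF t] e2[OF t] e3[OF t] by (simp add: vec_eq_iff forall_3)
qed

lemma alg_C:
  fixes l1 l2 h ea eb :: real
  assumes "l1 \<noteq> 0" "l1 \<noteq> l2"
    and D: "2 * (h * ea * l1^2 - l1 * l2 * (ea - eb) / (l1 - l2)) \<noteq> 0"
  defines "T \<equiv> (2 * h * ea * l1 + (l1 + l2) * (eb - ea) / (l1 - l2) - (ea - eb))
      / (2 * (h * ea * l1^2 - l1 * l2 * (ea - eb) / (l1 - l2)))"
  shows "(ea - eb + (l2 * (eb - 1) - l1 * (ea - 1)) * T) / (l1 - l2) = h * ea - T * (l1 * h * ea + ea - 1)"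
proof -
  have d: "l1 - l2 \<noteq> 0" using assms by simp
  define N where "N = 2 * h * ea * l1 + (l1 + l2) * (eb - ea) / (l1 - l2) - (ea - eb)"
  define DD where "DD = 2 * (h * ea * l1^2 - l1 * l2 * (ea - eb) / (l1 - l2))"
  have TD: "T * DD = N" unfolding T_def N_def DD_def using D by simp
  have N': "N * (l1 - l2) = 2 * l1 * ((l1 - l2) * h * ea - (ea - eb))"
    unfolding N_def using d by (simp add: field_simps; simp add: algebra_simps)
  have D': "DD * (l1 - l2) = 2 * l1 * ((l1 - l2) * l1 * h * ea - l2 * (ea - eb))"
    unfolding DD_def using d by (simp add: field_simps power2_eq_square; simp add: algebra_simps)
  have "2 * l1 * (T * ((l1 - l2) * l1 * h * ea - l2 * (ea - eb))) = 2 * l1 * ((l1 - l2) * h * ea - (ea - eb))"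
    using TD N' D' by (metis mult.assoc mult.commute)
  then have TQ: "T * ((l1 - l2) * l1 * h * ea - l2 * (ea - eb)) = (l1 - l2) * h * ea - (ea - eb)"
    using assms(1) by simp
  show ?thesis using d TQ
    by (simp add: field_simps; simp add: algebra_simps)
qed

lemma aux_div:
  fixes X Y Z d l :: real
  assumes "d \<noteq> 0" "X + Y * l = Z * d"
  shows "1 + X / d + Y / d * l = Z + 1"
proof -
  have "X / d + Y / d * l = (X + Y * l) / d" by (simp add: add_divide_distrib)
  also have "... = Z" using assms by simp
  finally show ?thesis by simp
qed

lemma alg_AB:
  fixes l1 l2 ea eb T :: real
  assumes "l1 \<noteq> l2"
  shows "1 + (l1 * (eb - 1) - l2 * (ea - 1) + l1 * l2 * (ea - eb) * T) / (l1 - l2)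
      + (ea - eb + (l2 * (eb - 1) - l1 * (ea - 1)) * T) / (l1 - l2) * l1 = ea + T * l1 * (1 - ea)"
    and "1 + (l1 * (eb - 1) - l2 * (ea - 1) + l1 * l2 * (ea - eb) * T) / (l1 - l2)
      + (ea - eb + (l2 * (eb - 1) - l1 * (ea - 1)) * T) / (l1 - l2) * l2 = eb + T * l2 * (1 - eb)"
proof -
  have d: "l1 - l2 \<noteq> 0" using assms by simp
  have "(l1 * (eb - 1) - l2 * (ea - 1) + l1 * l2 * (ea - eb) * T) + (ea - eb + (l2 * (eb - 1) - l1 * (ea - 1)) * T) * l1
     = (ea + T * l1 * (1 - ea) - 1) * (l1 - l2)" by (simp add: algebra_simps)
  from aux_div[OF d this] show "1 + (l1 * (eb - 1) - l2 * (ea - 1) + l1 * l2 * (ea - eb) * T) / (l1 - l2)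
      + (ea - eb + (l2 * (eb - 1) - l1 * (ea - 1)) * T) / (l1 - l2) * l1 = ea + T * l1 * (1 - ea)"
    by simp
  have "(l1 * (eb - 1) - l2 * (ea - 1) + l1 * l2 * (ea - eb) * T) + (ea - eb + (l2 * (eb - 1) - l1 * (ea - 1)) * T) * l2
     = (eb + T * l2 * (1 - eb) - 1) * (l1 - l2)" by (simp add: algebra_simps)
  from aux_div[OF d this] show "1 + (l1 * (eb - 1) - l2 * (ea - 1) + l1 * l2 * (ea - eb) * T) / (l1 - l2)
      + (ea - eb + (l2 * (eb - 1) - l1 * (ea - 1)) * T) / (l1 - l2) * l2 = eb + T * l2 * (1 - eb)"
    by simp
qed

lemma rels:
  fixes l1 l2 h :: real
  assumes "l1 \<noteq> l2" and "h > 0"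
    and "l1 \<noteq> 0 \<Longrightarrow> T1_den l1 l2 h \<noteq> 0"
    and F0: "phi l1 l2 h \<noteq> 0"
  shows "psi l1 l2 h + phi l1 l2 h * l1 = exp (l1 * h) + phi l1 l2 h * theta l1 l2 h * l1 * (1 - exp (l1 * h))"
    and "psi l1 l2 h + phi l1 l2 h * l2 = exp (l2 * h) + phi l1 l2 h * theta l1 l2 h * l2 * (1 - exp (l2 * h))"
    and "phi l1 l2 h = h * exp (l1 * h) - phi l1 l2 h * theta l1 l2 h * (l1 * h * exp (l1 * h) + exp (l1 * h) - 1)"
proof -
  have d: "l1 - l2 \<noteq> 0" using assms by simp
  have "(psi l1 l2 h + phi l1 l2 h * l1 = exp (l1 * h) + phi l1 l2 h * theta l1 l2 h * l1 * (1 - exp (l1 * h)))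
    \<and> (psi l1 l2 h + phi l1 l2 h * l2 = exp (l2 * h) + phi l1 l2 h * theta l1 l2 h * l2 * (1 - exp (l2 * h)))
    \<and> (phi l1 l2 h = h * exp (l1 * h) - phi l1 l2 h * theta l1 l2 h * (l1 * h * exp (l1 * h) + exp (l1 * h) - 1))"
  proof (cases "l1 = 0")
    case True
    then have l2: "l2 \<noteq> 0" using assms by auto
    have "l2 * h \<noteq> 0" using l2 assms by simp
    then have e: "exp (l2 * h) - 1 \<noteq> 0" by simp
    show ?thesis using True l2 e assms(2)
      by (simp add: psi_def phi_def theta_def field_simps)
  next
    case False
    have Tv: "phi l1 l2 h * theta l1 l2 h = T1 l1 l2 h"
      using False F0 by (simp add: theta_def)
    have C: "phi l1 l2 h = h * exp (l1 * h) - T1 l1 l2 h * (l1 * h * exp (l1 * h) + exp (l1 * h) - 1)"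
      using alg_C[OF False assms(1), of h "exp (l1 * h)" "exp (l2 * h)"] assms(3)[OF False] False
      by (simp add: phi_def T1_def T1_num_def T1_den_def)
    have A: "psi l1 l2 h + phi l1 l2 h * l1 = exp (l1 * h) + T1 l1 l2 h * l1 * (1 - exp (l1 * h))"
      using False alg_AB(1)[OF assms(1)] unfolding psi_def phi_def by simp
    have B: "psi l1 l2 h + phi l1 l2 h * l2 = exp (l2 * h) + T1 l1 l2 h * l2 * (1 - exp (l2 * h))"
      using False alg_AB(2)[OF assms(1)] unfolding psi_def phi_def by simp
    show ?thesis using A B C Tv by simp
  qed
  then show "psi l1 l2 h + phi l1 l2 h * l1 = exp (l1 * h) + phi l1 l2 h * theta l1 l2 h * l1 * (1 - exp (l1 * h))"
    and "psi l1 l2 h + phi l1 l2 h * l2 = exp (l2 * h) + phi l1 l2 h * theta l1 l2 h * l2 * (1 - exp (l2 * h))"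
    and "phi l1 l2 h = h * exp (l1 * h) - phi l1 l2 h * theta l1 l2 h * (l1 * h * exp (l1 * h) + exp (l1 * h) - 1)"
    by auto
qed

lemma step_iff:
  fixes F P th l1 l2 :: real and y z :: "real^3"
  assumes "F \<noteq> 0"
  shows "((1 / F) *\<^sub>R (y - P *\<^sub>R z) = J3 l1 l2 *v (th *\<^sub>R y + (1 - th) *\<^sub>R z)) \<longleftrightarrow>
    (y$1 - P * z$1 = F * (l1 * (th * y$1 + (1 - th) * z$1) + (th * y$2 + (1 - th) * z$2))
     \<and> y$2 - P * z$2 = F * (l1 * (th * y$2 + (1 - th) * z$2))
     \<and> y$3 - P * z$3 = F * (l2 * (th * y$3 + (1 - th) * z$3)))"
  using assms by (simp add: vec_eq_iff forall_3 J3_mult field_simps)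

lemma step_alg:
  fixes F P th l1 l2 h ea eb za zb zc :: real
  assumes A: "P + F * l1 = ea + F * th * l1 * (1 - ea)"
    and B: "P + F * l2 = eb + F * th * l2 * (1 - eb)"
    and C: "F = h * ea - F * th * (l1 * h * ea + ea - 1)"
  shows "ea * (za + h * zb) - P * za = F * (l1 * (th * (ea * (za + h * zb)) + (1 - th) * za) + (th * (ea * zb) + (1 - th) * zb))"
    and "ea * zb - P * zb = F * (l1 * (th * (ea * zb) + (1 - th) * zb))"
    and "eb * zc - P * zc = F * (l2 * (th * (eb * zc) + (1 - th) * zc))"
proof -
  have A': "ea + F * th * l1 * (1 - ea) - P - F * l1 = 0" using A by simp
  have B': "eb + F * th * l2 * (1 - eb) - P - F * l2 = 0" using B by simp
  have C': "h * ea - F * th * (l1 * h * ea + ea - 1) - F = 0" using C by simp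
  have "ea * (za + h * zb) - P * za - F * (l1 * (th * (ea * (za + h * zb)) + (1 - th) * za) + (th * (ea * zb) + (1 - th) * zb))
    = za * (ea + F * th * l1 * (1 - ea) - P - F * l1) + zb * (h * ea - F * th * (l1 * h * ea + ea - 1) - F)"
    by (simp add: algebra_simps)
  then show "ea * (za + h * zb) - P * za = F * (l1 * (th * (ea * (za + h * zb)) + (1 - th) * za) + (th * (ea * zb) + (1 - th) * zb))"
    using A' C' by simp
  have "ea * zb - P * zb - F * (l1 * (th * (ea * zb) + (1 - th) * zb)) = zb * (ea + F * th * l1 * (1 - ea) - P - F * l1)"
    by (simp add: algebra_simps)
  then show "ea * zb - P * zb = F * (l1 * (th * (ea * zb) + (1 - th) * zb))" using A' by simp
  have "eb * zc - P * zc - F * (l2 * (th * (eb * zc) + (1 - th) * zc)) = zc * (eb + F * th * l2 * (1 - eb) - P - F * l2)"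
    by (simp add: algebra_simps)
  then show "eb * zc - P * zc = F * (l2 * (th * (eb * zc) + (1 - th) * zc))" using B' by simp
qed

lemma step_unique:
  fixes F P th l1 l2 :: real and y y' z :: "real^3"
  assumes nz: "(1 - F * l1 * th) * (1 - F * l2 * th) \<noteq> 0"
    and e1: "y$1 - P * z$1 = F * (l1 * (th * y$1 + (1 - th) * z$1) + (th * y$2 + (1 - th) * z$2))"
    and e2: "y$2 - P * z$2 = F * (l1 * (th * y$2 + (1 - th) * z$2))"
    and e3: "y$3 - P * z$3 = F * (l2 * (th * y$3 + (1 - th) * z$3))"
    and f1: "y'$1 - P * z$1 = F * (l1 * (th * y'$1 + (1 - th) * z$1) + (th * y'$2 + (1 - th) * z$2))"
    and f2: "y'$2 - P * z$2 = F * (l1 * (th * y'$2 + (1 - th) * z$2))"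
    and f3: "y'$3 - P * z$3 = F * (l2 * (th * y'$3 + (1 - th) * z$3))"
  shows "y = y'"
proof -
  have n1: "1 - F * l1 * th \<noteq> 0" and n2: "1 - F * l2 * th \<noteq> 0" using nz by auto
  have "(y$3 - y'$3) * (1 - F * l2 * th) = 0" using e3 f3 by (simp add: algebra_simps)
  then have 3: "y$3 = y'$3" using n2 by simp
  have "(y$2 - y'$2) * (1 - F * l1 * th) = 0" using e2 f2 by (simp add: algebra_simps)
  then have 2: "y$2 = y'$2" using n1 by simp
  have "(y$1 - y'$1) * (1 - F * l1 * th) = F * th * (y$2 - y'$2)" using e1 f1 by (simp add: algebra_simps)
  then have "(y$1 - y'$1) * (1 - F * l1 * th) = 0" using 2 by simp
  then have 1: "y$1 = y'$1" using n1 by simp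
  show ?thesis using 1 2 3 by (simp add: vec_eq_iff forall_3)
qed

theorem theorem7:
  fixes l1 l2 h :: real
  assumes "l1 \<noteq> l2" and "h > 0"
    and "l1 \<noteq> 0 \<Longrightarrow> T1_den l1 l2 h \<noteq> 0"
    and "phi l1 l2 h \<noteq> 0"
    and "(1 - phi l1 l2 h * l1 * theta l1 l2 h) * (1 - phi l1 l2 h * l2 * theta l1 l2 h) \<noteq> 0"
  shows "exact_scheme h (psi l1 l2 h) (phi l1 l2 h) (theta l1 l2 h) (J3 l1 l2)"
  unfolding exact_scheme_def
proof (rule allI, rule allI, rule allI, rule impI)
  fix x0 xs and x :: "real \<Rightarrow> real^3"
  assume H: "xs 0 = x0 \<and> scheme_step (psi l1 l2 h) (phi l1 l2 h) (theta l1 l2 h) (J3 l1 l2) xs \<and> x 0 = x0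
        \<and> (\<forall>t\<ge>0. (x has_vector_derivative (J3 l1 l2 *v x t)) (at t within {0..}))"
  define P where "P = psi l1 l2 h"
  define F where "F = phi l1 l2 h"
  define th where "th = theta l1 l2 h"
  note R = rels[OF assms(1-4), folded P_def F_def th_def]
  have F0: "F \<noteq> 0" using assms(4) F_def by simp
  have nz: "(1 - F * l1 * th) * (1 - F * l2 * th) \<noteq> 0" using assms(5) by (simp add: F_def th_def)
  have sch: "\<And>k. (1 / F) *\<^sub>R (xs (Suc k) - P *\<^sub>R xs k) = J3 l1 l2 *v (th *\<^sub>R xs (Suc k) + (1 - th) *\<^sub>R xs k)"
    using H by (simp add: scheme_step_def P_def F_def th_def)
  have sol: "\<And>t. t \<ge> 0 \<Longrightarrow> x t = vector [exp (l1 * t) * (x 0 $ 1 + t * x 0 $ 2), exp (l1 * t) * x 0 $ 2, exp (l2 * t) * x 0 $ 3]"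
    using ode_sol H by blast
  show "\<forall>k. xs k = x (real k * h)"
  proof
    fix k show "xs k = x (real k * h)"
    proof (induction k)
      case 0 then show ?case using H by simp
    next
      case (Suc k)
      define z where "z = x (real k * h)"
      define y where "y = x (real (Suc k) * h)"
      have kh: "real k * h \<ge> 0" and kh1: "real (Suc k) * h \<ge> 0" using assms(2) by auto
      have zf: "z = vector [exp (l1 * (real k * h)) * (x 0 $ 1 + (real k * h) * x 0 $ 2), exp (l1 * (real k * h)) * x 0 $ 2, exp (l2 * (real k * h)) * x 0 $ 3]"
        using sol[OF kh] z_def by simp
      have yf: "y = vector [exp (l1 * (real (Suc k) * h)) * (x 0 $ 1 + (real (Suc k) * h) * x 0 $ 2), exp (l1 * (real (Suc k) * h)) * x 0 $ 2, exp (l2 * (real (Suc k) * h)) * x 0 $ 3]"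
        using sol[OF kh1] y_def by simp
      have ex1: "exp (l1 * (real (Suc k) * h)) = exp (l1 * (real k * h)) * exp (l1 * h)"
        by (simp add: algebra_simps flip: exp_add)
      have ex2: "exp (l2 * (real (Suc k) * h)) = exp (l2 * (real k * h)) * exp (l2 * h)"
        by (simp add: algebra_simps flip: exp_add)
      have y1: "y$1 = exp (l1 * h) * (z$1 + h * z$2)" using yf zf ex1 by (simp add: algebra_simps)
      have y2: "y$2 = exp (l1 * h) * z$2" using yf zf ex1 by simp
      have y3: "y$3 = exp (l2 * h) * z$3" using yf zf ex2 by simp
      note SA = step_alg(1)[where za="z$1" and zb="z$2", OF R(1) R(2) R(3)]
        step_alg(2)[where zb="z$2", OF R(1) R(2) R(3)] step_alg(3)[where zc="z$3", OF R(1) R(2) R(3)]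
      have ystep: "y$1 - P * z$1 = F * (l1 * (th * y$1 + (1 - th) * z$1) + (th * y$2 + (1 - th) * z$2))
     \<and> y$2 - P * z$2 = F * (l1 * (th * y$2 + (1 - th) * z$2))
     \<and> y$3 - P * z$3 = F * (l2 * (th * y$3 + (1 - th) * z$3))"
        using SA y1 y2 y3 by simp
      have xstep: "xs (Suc k)$1 - P * z$1 = F * (l1 * (th * xs (Suc k)$1 + (1 - th) * z$1) + (th * xs (Suc k)$2 + (1 - th) * z$2))
     \<and> xs (Suc k)$2 - P * z$2 = F * (l1 * (th * xs (Suc k)$2 + (1 - th) * z$2))
     \<and> xs (Suc k)$3 - P * z$3 = F * (l2 * (th * xs (Suc k)$3 + (1 - th) * z$3))"
        using sch[of k] step_iff[OF F0] Suc.IH z_def by simp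
      show ?case using step_unique[OF nz] xstep ystep y_def by blast
    qed
  qed
qed

end
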